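(* Let $U_1=\ln Z_1-H_M(\underline\theta)$. Then for every $\underline\theta\in\Theta$, $$\mathbb E_{\underline\theta}(U_1)=\int_0^\infty\ln(z)\,[1-G_\alpha(\rho z)]\,g_\alpha(z)\,dz+\int_0^\infty\ln(z)\left[1-G_\alpha\!\left(\frac{z}{\rho}\right)\right]g_\alpha(z)\,dz,$$ where $\rho=\min\{\theta_1,\theta_2\}/\max\{\theta_1,\theta_2\}\in(0,1]$.
   Context: Fix a known $\alpha>0$. $X_1,X_2$ are independent, $X_i$ having density $f(x\mid\theta_i)=\frac{x^{\alpha-1}e^{-x/\theta_i}}{\Gamma(\alpha)\theta_i^{\alpha}}$, $x>0$, with unknown $\underline\theta=(\theta_1,\theta_2)\in\Theta=(0,\infty)^2$. $Z_1=\min\{X_1,X_2\}$, $Z_2=\max\{X_1,X_2\}$. The selected better entropy (up to an additive constant) is $H_M(\underline\theta)=\ln\theta_1\, I(X_1\le X_2)+\ln\theta_2\, I(X_1>X_2)$. $G_\alpha,g_\alpha$ are the distribution function and density of the gamma distribution with shape $\alpha$, scale $1$. *)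

theory Defs
  imports "HOL-Probability.Probability"
begin

definition gamma_dens :: "real \<Rightarrow> real \<Rightarrow> real \<Rightarrow> real" where
  "gamma_dens a th x =
     (if x > 0 then x powr (a - 1) * exp (- x / th) / (Gamma a * th powr a) else 0)"

definition g_alpha :: "real \<Rightarrow> real \<Rightarrow> real" where
  "g_alpha a x = gamma_dens a 1 x"

definition G_alpha :: "real \<Rightarrow> real \<Rightarrow> real" where
  "G_alpha a x = (\<integral>t\<in>{..x}. g_alpha a t \<partial>lborel)"

text \<open>Selected better entropy (up to additive constant): H_M.\<close>
definition H_M :: "real \<Rightarrow> real \<Rightarrow> real \<Rightarrow> real \<Rightarrow> real" where
  "H_M th1 th2 x1 x2 = ln th1 * (if x1 \<le> x2 then 1 else 0) + ln th2 * (if x1 > x2 then 1 else 0)"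

end

theory Submission
  imports Defs
begin

lemma gd_meas[measurable]: "gamma_dens a th \<in> borel_measurable borel"
  unfolding gamma_dens_def by measurable

lemma g_meas[measurable]: "g_alpha a \<in> borel_measurable borel"
  unfolding g_alpha_def by measurable

lemma gd_nonneg: "a > 0 \<Longrightarrow> th > 0 \<Longrightarrow> 0 \<le> gamma_dens a th x"
  unfolding gamma_dens_def using Gamma_real_pos[of a] by auto

lemma g_nonneg: "a > 0 \<Longrightarrow> 0 \<le> g_alpha a x"
  unfolding g_alpha_def using gd_nonneg by auto

lemma g_alt: "a > 0 \<Longrightarrow> g_alpha a x = indicator {0..} x * x powr (a - 1) / exp x / Gamma a"
  unfolding g_alpha_def gamma_dens_def
  by (auto simp: indicator_def exp_minus field_simps)

lemma gd_scale: "th > 0 \<Longrightarrow> gamma_dens a th x = g_alpha a (x / th) / th"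
proof (cases "x > 0")
  case True
  assume th: "th > 0"
  have "(x / th) powr (a - 1) = th * x powr (a - 1) / th powr a"
    using True th by (simp add: powr_divide powr_diff field_simps)
  then show ?thesis using True th unfolding g_alpha_def gamma_dens_def
    by simp
qed (auto simp: g_alpha_def gamma_dens_def divide_pos_pos zero_less_divide_iff)

lemma g_hasint: "a > 0 \<Longrightarrow> has_bochner_integral lborel (g_alpha a) 1"
proof -
  assume a: "a > 0"
  have G: "Gamma a > 0" using Gamma_real_pos a by auto
  have "(\<integral>\<^sup>+x. ennreal (g_alpha a x) \<partial>lborel)
      = (\<integral>\<^sup>+x. ennreal (indicator {0..} x * x powr (a - 1) / exp x) / ennreal (Gamma a) \<partial>lborel)"
    using a G by (intro nn_integral_cong) (simp add: g_alt divide_ennreal)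
  also have "\<dots> = (\<integral>\<^sup>+x. ennreal (indicator {0..} x * x powr (a - 1) / exp x) \<partial>lborel) / ennreal (Gamma a)"
    by (rule nn_integral_divide) measurable
  also have "\<dots> = ennreal (Gamma a) / ennreal (Gamma a)"
    using Gamma_conv_nn_integral_real[OF a] by simp
  also have "\<dots> = 1" using G
    by (simp add: divide_ennreal[symmetric])
  finally show ?thesis
    by (intro has_bochner_integral_nn_integral) (auto simp: g_nonneg a)
qed

lemma g_integrable: "a > 0 \<Longrightarrow> integrable lborel (g_alpha a)"
  using g_hasint by (auto simp: has_bochner_integral_iff)

lemma g_integral: "a > 0 \<Longrightarrow> integral\<^sup>L lborel (g_alpha a) = 1"
  using g_hasint by (auto simp: has_bochner_integral_iff)

lemma gd_integrable: "a > 0 \<Longrightarrow> th > 0 \<Longrightarrow> integrable lborel (gamma_dens a th)"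
proof -
  assume a: "a > 0" and th: "th > 0"
  have "integrable lborel (\<lambda>x. g_alpha a (0 + (1/th) * x))"
    using th by (intro lborel_integrable_real_affine g_integrable a) auto
  then have "integrable lborel (\<lambda>x. g_alpha a (0 + (1/th) * x) / th)" by auto
  then show ?thesis using th by (simp add: gd_scale[OF th, abs_def])
qed

lemma gd_integral: "a > 0 \<Longrightarrow> th > 0 \<Longrightarrow> integral\<^sup>L lborel (gamma_dens a th) = 1"
proof -
  assume a: "a > 0" and th: "th > 0"
  have "integral\<^sup>L lborel (gamma_dens a th) = \<bar>th\<bar> *\<^sub>R (\<integral>x. gamma_dens a th (0 + th * x) \<partial>lborel)"
    using th by (intro lborel_integral_real_affine) auto
  also have "\<dots> = th * (\<integral>x. g_alpha a x / th \<partial>lborel)"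
    using th by (simp add: gd_scale[OF th])
  also have "\<dots> = 1" using th g_integral[OF a] by simp
  finally show ?thesis .
qed

lemma ln_bound: "(x::real) > 0 \<Longrightarrow> a > 0 \<Longrightarrow> \<bar>ln x\<bar> \<le> (2/a) * x powr (-a/2) + x"
proof (cases "x \<ge> 1")
  case True
  assume "x > 0" "a > 0"
  then have "ln x \<le> x - 1" using ln_le_minus_one[of x] by simp
  moreover have "ln x \<ge> 0" using True by simp
  moreover have "0 \<le> (2/a) * x powr (-a/2)" using \<open>a > 0\<close> by simp
  ultimately show ?thesis by simp
next
  case False
  assume x: "x > 0" and a: "a > 0"
  have "ln (x powr (-a/2)) \<le> x powr (-a/2) - 1" using x by (intro ln_le_minus_one) simp
  then have "(-a/2) * ln x \<le> x powr (-a/2)" using x by (simp add: ln_powr)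
  then have "- ln x \<le> (2/a) * x powr (-a/2)" using a by (simp add: field_simps)
  moreover have "ln x \<le> 0" using False x by simp
  ultimately show ?thesis using x by simp
qed

lemma g_ln_integrable: "a > 0 \<Longrightarrow> integrable lborel (\<lambda>x. g_alpha a x * ln x)"
proof -
  assume a: "a > 0"
  define C1 where "C1 = (2/a) * Gamma (a/2) / Gamma a"
  define C2 where "C2 = Gamma (a+1) / Gamma a"
  have Ga: "Gamma a > 0" "Gamma (a/2) > 0" "Gamma (a+1) > 0" using a by (auto intro: Gamma_real_pos)
  have Gn: "Gamma a \<noteq> 0" "Gamma (a/2) \<noteq> 0" "Gamma (a+1) \<noteq> 0" using Ga by auto
  have C: "C1 \<ge> 0" "C2 \<ge> 0" using Ga a by (auto simp: C1_def C2_def)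
  have "integrable lborel (\<lambda>x. C1 * g_alpha (a/2) x + C2 * g_alpha (a+1) x)"
    using a by (intro Bochner_Integration.integrable_add integrable_mult_right g_integrable) auto
  then show ?thesis
  proof (rule Bochner_Integration.integrable_bound)
    show "(\<lambda>x. g_alpha a x * ln x) \<in> borel_measurable lborel" by measurable
    show "AE x in lborel. norm (g_alpha a x * ln x) \<le> norm (C1 * g_alpha (a/2) x + C2 * g_alpha (a+1) x)"
    proof (intro AE_I2)
      fix x :: real
      show "norm (g_alpha a x * ln x) \<le> norm (C1 * g_alpha (a/2) x + C2 * g_alpha (a+1) x)"
      proof (cases "x > 0")
        case False
        then show ?thesis unfolding g_alpha_def gamma_dens_def by simp
      next
        case True
        have e1: "g_alpha a x * x powr (-a/2) = g_alpha (a/2) x * (Gamma (a/2) / Gamma a)"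
          using True a Gn by (simp add: g_alt powr_add[symmetric] field_simps)
        have xx: "x * x powr (a - 1) = x powr a" using True by (simp add: powr_mult_base)
        have e2: "g_alpha a x * x = g_alpha (a+1) x * (Gamma (a+1) / Gamma a)"
          using True a Gn xx by (simp add: g_alt field_simps)
        have "norm (g_alpha a x * ln x) = g_alpha a x * \<bar>ln x\<bar>"
          using g_nonneg[OF a] by (simp add: abs_mult)
        also have "\<dots> \<le> g_alpha a x * ((2/a) * x powr (-a/2) + x)"
          using ln_bound[OF True a] g_nonneg[OF a] by (intro mult_left_mono) auto
        also have "\<dots> = (2/a) * (g_alpha a x * x powr (-a/2)) + g_alpha a x * x"
          by (simp add: algebra_simps)
        also have "\<dots> = C1 * g_alpha (a/2) x + C2 * g_alpha (a+1) x"
          unfolding e1 e2 C1_def C2_def by (simp add: algebra_simps)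
        also have "\<dots> \<le> norm (C1 * g_alpha (a/2) x + C2 * g_alpha (a+1) x)" by simp
        finally show ?thesis .
      qed
    qed
  qed
qed

lemma gd_ln_integrable: "a > 0 \<Longrightarrow> th > 0 \<Longrightarrow>
  integrable lborel (\<lambda>x. gamma_dens a th x * (ln x - ln th))"
proof -
  assume a: "a > 0" and th: "th > 0"
  have "integrable lborel (\<lambda>x. (\<lambda>u. g_alpha a u * ln u) (0 + (1/th) * x))"
    using th by (intro lborel_integrable_real_affine g_ln_integrable a) auto
  then have "integrable lborel (\<lambda>x. (\<lambda>u. g_alpha a u * ln u) (0 + (1/th) * x) / th)" by auto
  also have "(\<lambda>x. (\<lambda>u. g_alpha a u * ln u) (0 + (1/th) * x) / th) = (\<lambda>x. gamma_dens a th x * (ln x - ln th))"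
  proof
    fix x :: real
    show "(\<lambda>u. g_alpha a u * ln u) (0 + (1/th) * x) / th = gamma_dens a th x * (ln x - ln th)"
    proof (cases "x > 0")
      case True then show ?thesis using th by (simp add: gd_scale[OF th] ln_div)
    next
      case False then show ?thesis using th
        by (simp add: gamma_dens_def g_alpha_def zero_less_divide_iff zero_less_mult_iff)
    qed
  qed
  finally show ?thesis .
qed

lemma g_tail: "a > 0 \<Longrightarrow> (\<integral>u. g_alpha a u * indicator {t<..} u \<partial>lborel) = 1 - G_alpha a t"
proof -
  assume a: "a > 0"
  have "(\<lambda>u. g_alpha a u * indicator {t<..} u) = (\<lambda>u. g_alpha a u - g_alpha a u * indicator {..t} u)"
    by (auto simp: fun_eq_iff indicator_def)
  then have "(\<integral>u. g_alpha a u * indicator {t<..} u \<partial>lborel) = 1 - (\<integral>u. g_alpha a u * indicator {..t} u \<partial>lborel)"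
    using g_integrable[OF a] g_integral[OF a]
    by (simp add: Bochner_Integration.integral_diff integrable_real_mult_indicator)
  also have "(\<integral>u. g_alpha a u * indicator {..t} u \<partial>lborel) = G_alpha a t"
    unfolding G_alpha_def set_lebesgue_integral_def by (simp add: mult.commute)
  finally show ?thesis .
qed

lemma g_tail': "a > 0 \<Longrightarrow> (\<integral>u. g_alpha a u * indicator {t..} u \<partial>lborel) = 1 - G_alpha a t"
proof -
  assume a: "a > 0"
  have "(\<integral>u. g_alpha a u * indicator {t..} u \<partial>lborel) = (\<integral>u. g_alpha a u * indicator {t<..} u \<partial>lborel)"
    by (intro integral_cong_AE eventually_mono[OF AE_lborel_singleton[of t]]) (auto simp: indicator_def)
  then show ?thesis using g_tail[OF a] by simp
qed

lemma gd_tail: "a > 0 \<Longrightarrow> th > 0 \<Longrightarrow>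
   (\<integral>y. gamma_dens a th y * indicator {x<..} y \<partial>lborel) = 1 - G_alpha a (x / th)"
proof -
  assume a: "a > 0" and th: "th > 0"
  have "(\<integral>y. gamma_dens a th y * indicator {x<..} y \<partial>lborel)
     = \<bar>th\<bar> *\<^sub>R (\<integral>u. gamma_dens a th (0 + th * u) * indicator {x<..} (0 + th * u) \<partial>lborel)"
    using th by (intro lborel_integral_real_affine) auto
  also have "\<dots> = th * (\<integral>u. g_alpha a u * indicator {x/th<..} u / th \<partial>lborel)"
    unfolding real_scaleR_def using th by (intro arg_cong2[where f="(*)"] Bochner_Integration.integral_cong refl)
       (auto simp: gd_scale[OF th] indicator_def pos_divide_less_eq mult.commute)
  also have "\<dots> = 1 - G_alpha a (x / th)" using th g_tail[OF a] by simp
  finally show ?thesis .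
qed

lemma gd_tail': "a > 0 \<Longrightarrow> th > 0 \<Longrightarrow>
   (\<integral>y. gamma_dens a th y * indicator {x..} y \<partial>lborel) = 1 - G_alpha a (x / th)"
proof -
  assume a: "a > 0" and th: "th > 0"
  have "(\<integral>y. gamma_dens a th y * indicator {x..} y \<partial>lborel)
     = \<bar>th\<bar> *\<^sub>R (\<integral>u. gamma_dens a th (0 + th * u) * indicator {x..} (0 + th * u) \<partial>lborel)"
    using th by (intro lborel_integral_real_affine) auto
  also have "\<dots> = th * (\<integral>u. g_alpha a u * indicator {x/th..} u / th \<partial>lborel)"
    unfolding real_scaleR_def using th by (intro arg_cong2[where f="(*)"] Bochner_Integration.integral_cong refl)
       (auto simp: gd_scale[OF th] indicator_def pos_divide_le_eq mult.commute)
  also have "\<dots> = 1 - G_alpha a (x / th)" using th g_tail'[OF a] by simp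
  finally show ?thesis .
qed

lemma gd_subst: "a > 0 \<Longrightarrow> th > 0 \<Longrightarrow>
   (\<integral>x. gamma_dens a th x * (ln x - ln th) * \<phi> (x / th) \<partial>lborel)
   = (\<integral>z\<in>{0<..}. ln z * \<phi> z * g_alpha a z \<partial>lborel)"
proof -
  assume a: "a > 0" and th: "th > 0"
  have "(\<integral>x. gamma_dens a th x * (ln x - ln th) * \<phi> (x / th) \<partial>lborel)
     = \<bar>th\<bar> *\<^sub>R (\<integral>z. gamma_dens a th (0 + th * z) * (ln (0 + th * z) - ln th) * \<phi> ((0 + th * z) / th) \<partial>lborel)"
    using th by (intro lborel_integral_real_affine) auto
  also have "\<dots> = th * (\<integral>z. (indicator {0<..} z * (ln z * \<phi> z * g_alpha a z)) / th \<partial>lborel)"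
    unfolding real_scaleR_def
  proof (intro arg_cong2[where f="(*)"] Bochner_Integration.integral_cong refl)
    show "\<bar>th\<bar> = th" using th by simp
    fix z :: real
    show "gamma_dens a th (0 + th * z) * (ln (0 + th * z) - ln th) * \<phi> ((0 + th * z) / th)
       = (indicator {0<..} z * (ln z * \<phi> z * g_alpha a z)) / th"
    proof (cases "z > 0")
      case True then show ?thesis using th by (simp add: gd_scale[OF th] ln_mult)
    next
      case False then show ?thesis using th
        by (simp add: gamma_dens_def zero_less_mult_iff)
    qed
  qed
  also have "\<dots> = (\<integral>z\<in>{0<..}. ln z * \<phi> z * g_alpha a z \<partial>lborel)"
    using th unfolding set_lebesgue_integral_def by (simp add: real_scaleR_def)
  finally show ?thesis .
qed

lemma integrable_pair_prod:
  fixes f g :: "real \<Rightarrow> real"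
  assumes f: "integrable lborel f" and g: "integrable lborel g"
  shows "integrable (lborel \<Otimes>\<^sub>M lborel) (\<lambda>(x,y). f x * g y)"
proof -
  have fm[measurable]: "f \<in> borel_measurable lborel" using f by auto
  have gm[measurable]: "g \<in> borel_measurable lborel" using g by auto
  have "(\<integral>\<^sup>+z. ennreal (norm ((\<lambda>(x,y). f x * g y) z)) \<partial>(lborel \<Otimes>\<^sub>M lborel))
      = (\<integral>\<^sup>+x. \<integral>\<^sup>+y. ennreal (norm ((\<lambda>(x,y). f x * g y) (x, y))) \<partial>lborel \<partial>lborel)"
    by (rule lborel.nn_integral_fst[symmetric]) measurable
  also have "\<dots> = (\<integral>\<^sup>+x. ennreal (norm (f x)) * (\<integral>\<^sup>+y. ennreal (norm (g y)) \<partial>lborel) \<partial>lborel)"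
    by (intro nn_integral_cong) (simp add: abs_mult ennreal_mult nn_integral_cmult[symmetric])
  also have "\<dots> = (\<integral>\<^sup>+x. ennreal (norm (f x)) \<partial>lborel) * (\<integral>\<^sup>+y. ennreal (norm (g y)) \<partial>lborel)"
    by (rule nn_integral_multc) measurable
  also have "\<dots> < \<infinity>"
    using f g unfolding integrable_iff_bounded by (simp add: ennreal_mult_less_top)
  finally show ?thesis unfolding integrable_iff_bounded by (simp add: case_prod_beta)
qed

theorem lemma3p1:
  fixes M :: "'s measure" and X1 X2 :: "'s \<Rightarrow> real" and \<alpha> \<theta>1 \<theta>2 :: real
  assumes "prob_space M"
    and "\<alpha> > 0" and "\<theta>1 > 0" and "\<theta>2 > 0"
    and "distributed M lborel X1 (\<lambda>x. ennreal (gamma_dens \<alpha> \<theta>1 x))"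
    and "distributed M lborel X2 (\<lambda>x. ennreal (gamma_dens \<alpha> \<theta>2 x))"
    and "prob_space.indep_var M borel X1 borel X2"
  shows "let \<rho> = min \<theta>1 \<theta>2 / max \<theta>1 \<theta>2 in
    prob_space.expectation M
      (\<lambda>\<omega>. ln (min (X1 \<omega>) (X2 \<omega>)) - H_M \<theta>1 \<theta>2 (X1 \<omega>) (X2 \<omega>))
    = (\<integral>z\<in>{0<..}. ln z * (1 - G_alpha \<alpha> (\<rho> * z)) * g_alpha \<alpha> z \<partial>lborel)
    + (\<integral>z\<in>{0<..}. ln z * (1 - G_alpha \<alpha> (z / \<rho>)) * g_alpha \<alpha> z \<partial>lborel)"
proof -
  interpret prob_space M by fact
  note a = \<open>\<alpha> > 0\<close> and t1 = \<open>\<theta>1 > 0\<close> and t2 = \<open>\<theta>2 > 0\<close>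
  define p1 where "p1 = gamma_dens \<alpha> \<theta>1"
  define p2 where "p2 = gamma_dens \<alpha> \<theta>2"
  have p1m[measurable]: "p1 \<in> borel_measurable borel" unfolding p1_def by measurable
  have p2m[measurable]: "p2 \<in> borel_measurable borel" unfolding p2_def by measurable
  have p1n: "\<And>x. 0 \<le> p1 x" unfolding p1_def using gd_nonneg a t1 by auto
  have p2n: "\<And>x. 0 \<le> p2 x" unfolding p2_def using gd_nonneg a t2 by auto
  have c1: "(case i of True \<Rightarrow> (lborel::real measure) | False \<Rightarrow> lborel) = lborel" for i by (cases i) auto
  have c2: "(case i of True \<Rightarrow> (borel::real measure) | False \<Rightarrow> borel) = borel" for i by (cases i) auto
  have I: "indep_var lborel X1 lborel X2"
    using assms(7) unfolding indep_var_def indep_vars_def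
    by (simp add: measurable_lborel2 c1 c2)
  have D0: "distributed M (lborel \<Otimes>\<^sub>M lborel) (\<lambda>x. (X1 x, X2 x))
      (\<lambda>(x, y). ennreal (p1 x) * ennreal (p2 y))"
    using distributed_joint_indep[OF sigma_finite_lborel sigma_finite_lborel assms(5) assms(6)]
      I unfolding p1_def p2_def by simp
  have "(\<lambda>(x, y). ennreal (p1 x) * ennreal (p2 y)) = (\<lambda>z. ennreal ((\<lambda>(x,y). p1 x * p2 y) z))"
    using p1n p2n by (auto simp: fun_eq_iff ennreal_mult)
  with D0 have D: "distributed M (lborel \<Otimes>\<^sub>M lborel) (\<lambda>x. (X1 x, X2 x))
      (\<lambda>z. ennreal ((\<lambda>(x,y). p1 x * p2 y) z))" by simp
  define h where "h = (\<lambda>(x::real, y::real). ln (min x y) - H_M \<theta>1 \<theta>2 x y)"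
  have hm[measurable]: "h \<in> borel_measurable (lborel \<Otimes>\<^sub>M lborel)"
    unfolding h_def H_M_def by measurable
  define FA where "FA = (\<lambda>(x::real, y::real). p1 x * (ln x - ln \<theta>1) * (p2 y * (if x \<le> y then 1 else 0)))"
  define FB where "FB = (\<lambda>(x::real, y::real). p2 y * (ln y - ln \<theta>2) * (p1 x * (if y < x then 1 else 0)))"
  have E1: "expectation (\<lambda>\<omega>. ln (min (X1 \<omega>) (X2 \<omega>)) - H_M \<theta>1 \<theta>2 (X1 \<omega>) (X2 \<omega>))
      = (\<integral>z. (\<lambda>(x,y). p1 x * p2 y) z * h z \<partial>(lborel \<Otimes>\<^sub>M lborel))"
    using distributed_integral[OF D hm] p1n p2n by (auto simp: h_def)
  also have "\<dots> = (\<integral>z. FA z + FB z \<partial>(lborel \<Otimes>\<^sub>M lborel))"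
  proof (intro Bochner_Integration.integral_cong refl)
    fix z :: "real \<times> real"
    obtain x y where z: "z = (x, y)" by (cases z)
    show "(\<lambda>(x,y). p1 x * p2 y) z * h z = FA z + FB z"
    proof (cases "x > 0 \<and> y > 0")
      case True
      then show ?thesis unfolding z h_def FA_def FB_def H_M_def
        by (cases "x \<le> y") (auto simp: min_def algebra_simps)
    next
      case False
      then have "p1 x = 0 \<or> p2 y = 0" unfolding p1_def p2_def gamma_dens_def by auto
      then show ?thesis unfolding z FA_def FB_def by auto
    qed
  qed
  finally have E2: "expectation (\<lambda>\<omega>. ln (min (X1 \<omega>) (X2 \<omega>)) - H_M \<theta>1 \<theta>2 (X1 \<omega>) (X2 \<omega>))
      = (\<integral>z. FA z + FB z \<partial>(lborel \<Otimes>\<^sub>M lborel))" .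
  have FAm[measurable]: "FA \<in> borel_measurable (lborel \<Otimes>\<^sub>M lborel)" unfolding FA_def by measurable
  have FBm[measurable]: "FB \<in> borel_measurable (lborel \<Otimes>\<^sub>M lborel)" unfolding FB_def by measurable
  have intA: "integrable (lborel \<Otimes>\<^sub>M lborel) FA"
  proof (rule Bochner_Integration.integrable_bound)
    show "integrable (lborel \<Otimes>\<^sub>M lborel) (\<lambda>(x,y). (p1 x * (ln x - ln \<theta>1)) * p2 y)"
      using gd_ln_integrable[OF a t1] gd_integrable[OF a t2] unfolding p1_def p2_def
      by (intro integrable_pair_prod)
    show "FA \<in> borel_measurable (lborel \<Otimes>\<^sub>M lborel)" by fact
    show "AE z in lborel \<Otimes>\<^sub>M lborel. norm (FA z) \<le> norm ((\<lambda>(x,y). (p1 x * (ln x - ln \<theta>1)) * p2 y) z)"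
      using p1n p2n by (intro AE_I2) (auto simp: FA_def abs_mult)
  qed
  have intB: "integrable (lborel \<Otimes>\<^sub>M lborel) FB"
  proof (rule Bochner_Integration.integrable_bound)
    show "integrable (lborel \<Otimes>\<^sub>M lborel) (\<lambda>(x,y). p1 x * (p2 y * (ln y - ln \<theta>2)))"
      using gd_ln_integrable[OF a t2] gd_integrable[OF a t1] unfolding p1_def p2_def
      by (intro integrable_pair_prod)
    show "FB \<in> borel_measurable (lborel \<Otimes>\<^sub>M lborel)" by fact
    show "AE z in lborel \<Otimes>\<^sub>M lborel. norm (FB z) \<le> norm ((\<lambda>(x,y). p1 x * (p2 y * (ln y - ln \<theta>2))) z)"
      using p1n p2n by (intro AE_I2) (auto simp: FB_def abs_mult)
  qed
  have E3: "(\<integral>z. FA z + FB z \<partial>(lborel \<Otimes>\<^sub>M lborel)) = integral\<^sup>L (lborel \<Otimes>\<^sub>M lborel) FA + integral\<^sup>L (lborel \<Otimes>\<^sub>M lborel) FB"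
    using intA intB by simp
  have "integral\<^sup>L (lborel \<Otimes>\<^sub>M lborel) FA = (\<integral>x. (\<integral>y. FA (x, y) \<partial>lborel) \<partial>lborel)"
    using lborel_pair.integral_fst'[OF intA] by simp
  also have "\<dots> = (\<integral>x. p1 x * (ln x - ln \<theta>1) * (\<lambda>t. 1 - G_alpha \<alpha> (\<theta>1/\<theta>2 * t)) (x / \<theta>1) \<partial>lborel)"
  proof (intro Bochner_Integration.integral_cong refl)
    fix x :: real
    have "(\<integral>y. FA (x, y) \<partial>lborel) = p1 x * (ln x - ln \<theta>1) * (\<integral>y. p2 y * indicator {x..} y \<partial>lborel)"
      unfolding FA_def by (simp add: indicator_def of_bool_def)
    also have "\<dots> = p1 x * (ln x - ln \<theta>1) * (1 - G_alpha \<alpha> (x / \<theta>2))"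
      unfolding p2_def using gd_tail'[OF a t2] by simp
    also have "x / \<theta>2 = \<theta>1/\<theta>2 * (x / \<theta>1)" using t1 by simp
    finally show "(\<integral>y. FA (x, y) \<partial>lborel) = p1 x * (ln x - ln \<theta>1) * (\<lambda>t. 1 - G_alpha \<alpha> (\<theta>1/\<theta>2 * t)) (x / \<theta>1)"
      by simp
  qed
  also have "\<dots> = (\<integral>z\<in>{0<..}. ln z * (1 - G_alpha \<alpha> (\<theta>1/\<theta>2 * z)) * g_alpha \<alpha> z \<partial>lborel)"
    unfolding p1_def by (rule gd_subst[OF a t1])
  finally have IA: "integral\<^sup>L (lborel \<Otimes>\<^sub>M lborel) FA = (\<integral>z\<in>{0<..}. ln z * (1 - G_alpha \<alpha> (\<theta>1/\<theta>2 * z)) * g_alpha \<alpha> z \<partial>lborel)" .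
  have "integral\<^sup>L (lborel \<Otimes>\<^sub>M lborel) FB = (\<integral>y. (\<integral>x. FB (x, y) \<partial>lborel) \<partial>lborel)"
    using lborel_pair.integral_snd[of "\<lambda>x y. FB (x, y)"] intB by simp
  also have "\<dots> = (\<integral>y. p2 y * (ln y - ln \<theta>2) * (\<lambda>t. 1 - G_alpha \<alpha> (\<theta>2/\<theta>1 * t)) (y / \<theta>2) \<partial>lborel)"
  proof (intro Bochner_Integration.integral_cong refl)
    fix y :: real
    have "(\<integral>x. FB (x, y) \<partial>lborel) = p2 y * (ln y - ln \<theta>2) * (\<integral>x. p1 x * indicator {y<..} x \<partial>lborel)"
      unfolding FB_def by (simp add: indicator_def of_bool_def)
    also have "\<dots> = p2 y * (ln y - ln \<theta>2) * (1 - G_alpha \<alpha> (y / \<theta>1))"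
      unfolding p1_def using gd_tail[OF a t1] by simp
    also have "y / \<theta>1 = \<theta>2/\<theta>1 * (y / \<theta>2)" using t2 by simp
    finally show "(\<integral>x. FB (x, y) \<partial>lborel) = p2 y * (ln y - ln \<theta>2) * (\<lambda>t. 1 - G_alpha \<alpha> (\<theta>2/\<theta>1 * t)) (y / \<theta>2)"
      by simp
  qed
  also have "\<dots> = (\<integral>z\<in>{0<..}. ln z * (1 - G_alpha \<alpha> (\<theta>2/\<theta>1 * z)) * g_alpha \<alpha> z \<partial>lborel)"
    unfolding p2_def by (rule gd_subst[OF a t2])
  finally have IB: "integral\<^sup>L (lborel \<Otimes>\<^sub>M lborel) FB = (\<integral>z\<in>{0<..}. ln z * (1 - G_alpha \<alpha> (\<theta>2/\<theta>1 * z)) * g_alpha \<alpha> z \<partial>lborel)" .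
  have MAIN: "expectation (\<lambda>\<omega>. ln (min (X1 \<omega>) (X2 \<omega>)) - H_M \<theta>1 \<theta>2 (X1 \<omega>) (X2 \<omega>))
     = (\<integral>z\<in>{0<..}. ln z * (1 - G_alpha \<alpha> (\<theta>1/\<theta>2 * z)) * g_alpha \<alpha> z \<partial>lborel)
     + (\<integral>z\<in>{0<..}. ln z * (1 - G_alpha \<alpha> (\<theta>2/\<theta>1 * z)) * g_alpha \<alpha> z \<partial>lborel)"
    using E2 E3 IA IB by simp
  show ?thesis
  proof (cases "\<theta>1 \<le> \<theta>2")
    case True
    have rho: "min \<theta>1 \<theta>2 / max \<theta>1 \<theta>2 = \<theta>1/\<theta>2" using True by simp
    have eqz: "\<And>z. z / (\<theta>1 / \<theta>2) = \<theta>2/\<theta>1 * z" using t1 t2 by simp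
    show ?thesis unfolding Let_def rho eqz using MAIN by linarith
  next
    case False
    have rho: "min \<theta>1 \<theta>2 / max \<theta>1 \<theta>2 = \<theta>2/\<theta>1" using False by simp
    have eqz: "\<And>z. z / (\<theta>2 / \<theta>1) = \<theta>1/\<theta>2 * z" using t1 t2 by simp
    show ?thesis unfolding Let_def rho eqz using MAIN by linarith
  qed
qed

end
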